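(* Let $\mathbb{K}$ be an infinite field, $n\in\mathbb{N}$, and $G\subseteq\mathrm{GL}_n(\mathbb{K})$ a subgroup endowed with a topology making it a topological group. If $G$ has an open subgroup which is soluble (resp. nilpotent), then $G$ has an open normal subgroup which is soluble (resp. nilpotent). *)

theory Defs
  imports "HOL-Analysis.Analysis" "HOL-Algebra.Solvable_Groups"
begin

text \<open>The general linear group GL_n(K) as a HOL-Algebra group; n = CARD('n).\<close>
definition GL :: "('a::field ^ 'n ^ 'n) monoid" where
  "GL = \<lparr> carrier = {A. invertible A}, mult = (**), one = mat 1 \<rparr>"

fun lower_central :: "('g, 'b) monoid_scheme \<Rightarrow> nat \<Rightarrow> 'g set" where
  "lower_central G 0 = carrier G"
| "lower_central G (Suc k) =
     generate G (\<Union>x \<in> carrier G. \<Union>y \<in> lower_central G k.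
        {x \<otimes>\<^bsub>G\<^esub> y \<otimes>\<^bsub>G\<^esub> inv\<^bsub>G\<^esub> x \<otimes>\<^bsub>G\<^esub> inv\<^bsub>G\<^esub> y})"

definition nilpotent_group :: "('g, 'b) monoid_scheme \<Rightarrow> bool" where
  "nilpotent_group G \<longleftrightarrow> group G \<and> (\<exists>k. lower_central G k = {\<one>\<^bsub>G\<^esub>})"

definition topological_group_on :: "'g topology \<Rightarrow> ('g, 'b) monoid_scheme \<Rightarrow> bool" where
  "topological_group_on T G \<longleftrightarrow> group G \<and> topspace T = carrier G \<and>
     continuous_map (prod_topology T T) T (\<lambda>(x, y). x \<otimes>\<^bsub>G\<^esub> y) \<and>
     continuous_map T T (\<lambda>x. inv\<^bsub>G\<^esub> x)"

end

theory Submission imports Defs "HOL-Library.Function_Algebras" begin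


interpretation fvs: vector_space "(\<lambda>c f x. c * f x) :: 'a::field \<Rightarrow> ('x \<Rightarrow> 'a) \<Rightarrow> ('x \<Rightarrow> 'a)"
  by unfold_locales (auto simp: fun_eq_iff algebra_simps)

definition coordf :: "('n::finite \<times> 'n \<times> bool) \<Rightarrow> ('a::field^'n^'n) \<Rightarrow> 'a" where
  "coordf c x = (case c of (i,j,b) \<Rightarrow> (if b then matrix_inv x else x) $ i $ j)"

definition pmon :: "('n::finite \<times> 'n \<times> bool) list \<Rightarrow> ('a::field^'n^'n) \<Rightarrow> 'a" where
  "pmon cs x = prod_list (map (\<lambda>c. coordf c x) cs)"

definition Bm :: "nat \<Rightarrow> (('a::field^'n^'n) \<Rightarrow> 'a) set" where
  "Bm D = pmon ` {cs. length cs \<le> D}"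

definition PF :: "nat \<Rightarrow> (('a::field^'n^'n) \<Rightarrow> 'a) set" where
  "PF D = fvs.span (Bm D)"

lemma finite_Bm: "finite (Bm D :: ('a::field^'n^'n \<Rightarrow> 'a) set)"
proof -
  have "finite {cs :: ('n \<times> 'n \<times> bool) list. set cs \<subseteq> UNIV \<and> length cs \<le> D}"
    by (rule finite_lists_length_le) simp
  then show ?thesis unfolding Bm_def by simp
qed

lemma PF_mono: "D \<le> D' \<Longrightarrow> PF D \<subseteq> PF D'"
  unfolding PF_def by (rule fvs.span_mono) (auto simp: Bm_def)

lemma PF_add: "f \<in> PF D \<Longrightarrow> g \<in> PF D \<Longrightarrow> (\<lambda>x. f x + g x) \<in> PF D"
  unfolding PF_def using fvs.span_add[of f "Bm D" g] by (simp add: plus_fun_def)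

lemma PF_scale: "f \<in> PF D \<Longrightarrow> (\<lambda>x. c * f x) \<in> PF D"
  unfolding PF_def using fvs.span_scale[of f "Bm D" c] by simp

lemma PF_zero: "(\<lambda>x. 0) \<in> PF D"
  unfolding PF_def using fvs.span_zero[of "Bm D"] by (simp add: zero_fun_def)

lemma PF_sum: "finite A \<Longrightarrow> (\<And>i. i \<in> A \<Longrightarrow> f i \<in> PF D) \<Longrightarrow> (\<lambda>x. \<Sum>i\<in>A. f i x) \<in> PF D"
  by (induction A rule: finite_induct) (auto intro: PF_add PF_zero)

lemma PF_diff: "f \<in> PF D \<Longrightarrow> g \<in> PF D \<Longrightarrow> (\<lambda>x. f x - g x) \<in> PF D"
  using PF_add[of f D "\<lambda>x. (-1) * g x"] PF_scale[of g D "-1"] by simp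

lemma PF_const: "(\<lambda>x. c) \<in> PF D"
proof -
  have "pmon [] \<in> Bm D" by (auto simp: Bm_def)
  then have "pmon [] \<in> PF D" unfolding PF_def by (rule fvs.span_base)
  then show ?thesis using PF_scale[of "pmon []" D c] by (simp add: pmon_def)
qed

lemma PF_coord: "(coordf c :: 'a::field^'n^'n \<Rightarrow> 'a) \<in> PF 1"
proof -
  have "pmon [c] \<in> Bm 1" by (auto simp: Bm_def)
  then have "pmon [c] \<in> PF 1" unfolding PF_def by (rule fvs.span_base)
  moreover have "pmon [c] = (coordf c :: 'a::field^'n^'n \<Rightarrow> 'a)" by (simp add: pmon_def fun_eq_iff)
  ultimately show ?thesis by metis
qed

lemma PF_subspace: "fvs.subspace (PF D)"
  unfolding PF_def by simp

lemma PF_mult_mon: 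
  fixes g :: "'a::field^'n^'n \<Rightarrow> 'a"
  assumes g: "g \<in> PF b" and cs: "length cs \<le> a"
  shows "(\<lambda>x. pmon cs x * g x) \<in> PF (a+b)"
proof -
  have g': "g \<in> fvs.span (Bm b)" using g by (simp add: PF_def)
  have sc: "(\<lambda>x. pmon cs x * (c * f x)) \<in> PF (a + b)"
    if "(\<lambda>x. pmon cs x * f x) \<in> PF (a + b)" for c and f :: "'a^'n^'n \<Rightarrow> 'a"
    using PF_scale[OF that, of c] by (simp add: mult.left_commute)
  have sub: "fvs.subspace {g :: 'a^'n^'n \<Rightarrow> 'a. (\<lambda>x. pmon cs x * g x) \<in> PF (a + b)}"
    using sc unfolding fvs.subspace_def
    by (auto simp: zero_fun_def plus_fun_def ring_distribs mult.left_commute[of _ "pmon cs _"] intro!: PF_add PF_scale PF_zero)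
  have base: "(\<lambda>x. pmon cs x * h x) \<in> PF (a + b)" if hB: "h \<in> Bm b" for h :: "'a^'n^'n \<Rightarrow> 'a"
  proof -
    obtain ds where h: "h = pmon ds" "length ds \<le> b" using hB by (auto simp: Bm_def)
    have "(pmon (cs @ ds) :: 'a^'n^'n \<Rightarrow> 'a) \<in> Bm (a+b)" using h cs by (auto simp: Bm_def)
    then have "(pmon (cs @ ds) :: 'a^'n^'n \<Rightarrow> 'a) \<in> PF (a+b)" unfolding PF_def by (rule fvs.span_base)
    moreover have "(pmon (cs @ ds) :: 'a^'n^'n \<Rightarrow> 'a) = (\<lambda>x. pmon cs x * h x)" by (simp add: h pmon_def fun_eq_iff)
    ultimately show ?thesis by simp
  qed
  show ?thesis using fvs.span_induct[OF g' sub] base by blast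
qed

lemma PF_mult:
  fixes f g :: "'a::field^'n^'n \<Rightarrow> 'a"
  assumes f: "f \<in> PF a" and g: "g \<in> PF b"
  shows "(\<lambda>x. f x * g x) \<in> PF (a+b)"
proof -
  have f': "f \<in> fvs.span (Bm a)" using f by (simp add: PF_def)
  have sub: "fvs.subspace {f. (\<lambda>x. f x * g x) \<in> PF (a + b)}"
  proof (rule fvs.subspaceI)
    show "0 \<in> {f. (\<lambda>x. f x * g x) \<in> PF (a + b)}"
      using PF_zero by (simp add: zero_fun_def)
  next
    fix f1 f2 :: "'a^'n^'n \<Rightarrow> 'a" assume "f1 \<in> {f. (\<lambda>x. f x * g x) \<in> PF (a + b)}"
      "f2 \<in> {f. (\<lambda>x. f x * g x) \<in> PF (a + b)}"
    then show "f1 + f2 \<in> {f. (\<lambda>x. f x * g x) \<in> PF (a + b)}"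
      using PF_add by (fastforce simp: algebra_simps)
  next
    fix c and f :: "'a^'n^'n \<Rightarrow> 'a" assume "f \<in> {f. (\<lambda>x. f x * g x) \<in> PF (a + b)}"
    then show "(\<lambda>x. c * f x) \<in> {f. (\<lambda>x. f x * g x) \<in> PF (a + b)}"
      using PF_scale[of _ "a+b" c] by (fastforce simp: algebra_simps)
  qed
  have base: "(\<lambda>x. h x * g x) \<in> PF (a + b)" if "h \<in> Bm a" for h
    using that PF_mult_mon[OF g] by (auto simp: Bm_def)
  show ?thesis using fvs.span_induct[OF f' sub] base by blast
qed



lemma minv:
  fixes A :: "'a::field^'n^'n"
  assumes "invertible A"
  shows "A ** matrix_inv A = mat 1" "matrix_inv A ** A = mat 1"
proof -
  have "\<exists>A'. A ** A' = mat 1 \<and> A' ** A = mat 1" using assms by (simp add: invertible_def)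
  then have "A ** matrix_inv A = mat 1 \<and> matrix_inv A ** A = mat 1"
    unfolding matrix_inv_def by (rule someI_ex)
  then show "A ** matrix_inv A = mat 1" "matrix_inv A ** A = mat 1" by auto
qed

lemma minv_unique:
  fixes A B :: "'a::field^'n^'n"
  assumes "invertible A" "B ** A = mat 1"
  shows "matrix_inv A = B"
proof -
  have "B = B ** (A ** matrix_inv A)" using minv[OF assms(1)] by simp
  also have "\<dots> = matrix_inv A" by (simp add: matrix_mul_assoc assms(2))
  finally show ?thesis by simp
qed

lemma minv_invertible:
  fixes A :: "'a::field^'n^'n"
  assumes "invertible A" shows "invertible (matrix_inv A)"
  using minv[OF assms] unfolding invertible_def by blast

lemma minv_minv:
  fixes A :: "'a::field^'n^'n"
  assumes "invertible A" shows "matrix_inv (matrix_inv A) = A"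
  using minv_unique[OF minv_invertible[OF assms]] minv[OF assms] by blast

lemma minv_mult:
  fixes A B :: "'a::field^'n^'n"
  assumes "invertible A" "invertible B"
  shows "matrix_inv (A ** B) = matrix_inv B ** matrix_inv A"
proof (rule minv_unique)
  show "invertible (A ** B)" using assms by (rule invertible_mult)
  have "matrix_inv B ** matrix_inv A ** (A ** B) = matrix_inv B ** (matrix_inv A ** A) ** B"
    by (simp add: matrix_mul_assoc)
  also have "\<dots> = mat 1" using minv[OF assms(1)] minv[OF assms(2)] by simp
  finally show "matrix_inv B ** matrix_inv A ** (A ** B) = mat 1" .
qed

lemma invertible_one: "invertible (mat 1 :: 'a::field^'n^'n)"
  unfolding invertible_def by (intro exI[of _ "mat 1"]) simp

lemma group_GL: "group (GL :: ('a::field^'n^'n) monoid)"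
proof (rule groupI)
  fix x y :: "'a^'n^'n" assume "x \<in> carrier GL" "y \<in> carrier GL"
  then show "x \<otimes>\<^bsub>GL\<^esub> y \<in> carrier GL" by (simp add: GL_def invertible_mult)
next
  show "\<one>\<^bsub>GL\<^esub> \<in> carrier (GL :: ('a::field^'n^'n) monoid)" by (simp add: GL_def invertible_one)
next
  fix x y z :: "'a^'n^'n"
  show "x \<otimes>\<^bsub>GL\<^esub> y \<otimes>\<^bsub>GL\<^esub> z = x \<otimes>\<^bsub>GL\<^esub> (y \<otimes>\<^bsub>GL\<^esub> z)"
    by (simp add: GL_def matrix_mul_assoc)
next
  fix x :: "'a^'n^'n"
  show "\<one>\<^bsub>GL\<^esub> \<otimes>\<^bsub>GL\<^esub> x = x" by (simp add: GL_def)
next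
  fix x :: "'a^'n^'n" assume "x \<in> carrier GL"
  then show "\<exists>y\<in>carrier GL. y \<otimes>\<^bsub>GL\<^esub> x = \<one>\<^bsub>GL\<^esub>"
    by (intro bexI[of _ "matrix_inv x"]) (auto simp: GL_def minv minv_invertible)
qed

lemma GL_simps: "carrier GL = {A. invertible A}" "mult GL = (**)" "one GL = mat 1"
  by (simp_all add: GL_def)

lemma GL_inv: "invertible (x::'a::field^'n^'n) \<Longrightarrow> inv\<^bsub>GL\<^esub> x = matrix_inv x"
  using group.inv_equality[OF group_GL, of "matrix_inv x" x]
  by (simp add: GL_def minv minv_invertible)

definition cm :: "'a::field^'n^'n \<Rightarrow> 'a^'n^'n \<Rightarrow> 'a^'n^'n" where
  "cm x y = x ** y ** matrix_inv x ** matrix_inv y"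

lemma cm_invertible: "invertible x \<Longrightarrow> invertible y \<Longrightarrow> invertible (cm x y)"
  unfolding cm_def by (intro invertible_mult minv_invertible)

lemma cm_inv: "invertible x \<Longrightarrow> invertible y \<Longrightarrow> matrix_inv (cm x y) = cm y x"
  unfolding cm_def
  by (simp add: minv_mult invertible_mult minv_invertible minv_minv matrix_mul_assoc)

definition MP :: "nat \<Rightarrow> ('a::field^'n^'n \<Rightarrow> 'a^'n^'n) \<Rightarrow> bool" where
  "MP k A \<longleftrightarrow> (\<forall>i j. (\<lambda>x. A x $ i $ j) \<in> PF k)"

lemma MP_mono: "MP k A \<Longrightarrow> k \<le> k' \<Longrightarrow> MP k' A"
  unfolding MP_def using PF_mono by blast

lemma MP_const: "MP k (\<lambda>x. C)"
  unfolding MP_def by (simp add: PF_const)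

lemma MP_id: "MP 1 (\<lambda>x. x)"
  unfolding MP_def
proof (intro allI)
  fix i j
  have "(\<lambda>x::'a^'n^'n. x $ i $ j) = coordf (i,j,False)" by (simp add: coordf_def fun_eq_iff)
  then show "(\<lambda>x::'a^'n^'n. x $ i $ j) \<in> PF 1" using PF_coord by metis
qed

lemma MP_minv: "MP 1 (\<lambda>x. matrix_inv x)"
  unfolding MP_def
proof (intro allI)
  fix i j
  have "(\<lambda>x::'a^'n^'n. matrix_inv x $ i $ j) = coordf (i,j,True)" by (simp add: coordf_def fun_eq_iff)
  then show "(\<lambda>x::'a^'n^'n. matrix_inv x $ i $ j) \<in> PF 1" using PF_coord by metis
qed

lemma MP_mult: "MP a A \<Longrightarrow> MP b B \<Longrightarrow> MP (a+b) (\<lambda>x. A x ** B x)"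
  unfolding MP_def matrix_matrix_mult_def
  by (auto intro!: PF_sum PF_mult)

definition good :: "nat \<Rightarrow> ('a::field^'n^'n \<Rightarrow> 'a^'n^'n) \<Rightarrow> bool" where
  "good k \<phi> \<longleftrightarrow> (\<exists>A B. MP k A \<and> MP k B \<and>
      (\<forall>x. invertible x \<longrightarrow> invertible (\<phi> x) \<and> \<phi> x = A x \<and> matrix_inv (\<phi> x) = B x))"

lemma good_coord:
  assumes "good k \<phi>"
  shows "\<exists>h\<in>PF k. \<forall>x. invertible x \<longrightarrow> coordf c (\<phi> x) = h x"
proof -
  obtain A B where AB: "MP k A" "MP k B"
    "\<forall>x. invertible x \<longrightarrow> invertible (\<phi> x) \<and> \<phi> x = A x \<and> matrix_inv (\<phi> x) = B x"
    using assms unfolding good_def by blast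
  obtain i j b where c: "c = (i,j,b)" by (cases c) auto
  show ?thesis
  proof (cases b)
    case True
    then show ?thesis using AB unfolding MP_def
      by (intro bexI[of _ "\<lambda>x. B x $ i $ j"]) (auto simp: c coordf_def)
  next
    case False
    then show ?thesis using AB unfolding MP_def
      by (intro bexI[of _ "\<lambda>x. A x $ i $ j"]) (auto simp: c coordf_def)
  qed
qed



lemma subst_pmon:
  fixes \<phi> :: "'a::field^'n^'n \<Rightarrow> 'a^'n^'n"
  assumes "good k \<phi>"
  shows "\<exists>h\<in>PF (k * length cs). \<forall>x. invertible x \<longrightarrow> pmon cs (\<phi> x) = h x"
proof (induction cs)
  case Nil
  then show ?case by (intro bexI[of _ "\<lambda>x. 1"]) (auto simp: pmon_def PF_const)
next
  case (Cons c cs)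
  then obtain h where h: "h \<in> PF (k * length cs)" "\<forall>x. invertible x \<longrightarrow> pmon cs (\<phi> x) = h x" by blast
  obtain h' where h': "h' \<in> PF k" "\<forall>x. invertible x \<longrightarrow> coordf c (\<phi> x) = h' x"
    using good_coord[OF assms] by blast
  have "(\<lambda>x. h' x * h x) \<in> PF (k + k * length cs)" by (rule PF_mult[OF h'(1) h(1)])
  then show ?case using h h' by (intro bexI[of _ "\<lambda>x. h' x * h x"]) (auto simp: pmon_def)
qed

lemma subst_PF:
  fixes \<phi> :: "'a::field^'n^'n \<Rightarrow> 'a^'n^'n" and f :: "'a^'n^'n \<Rightarrow> 'a"
  assumes "good k \<phi>" "f \<in> PF D"
  shows "\<exists>h\<in>PF (k * D). \<forall>x. invertible x \<longrightarrow> f (\<phi> x) = h x"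
proof -
  have f': "f \<in> fvs.span (Bm D)" using assms(2) by (simp add: PF_def)
  have sub: "fvs.subspace {f :: 'a^'n^'n \<Rightarrow> 'a. \<exists>h\<in>PF (k * D). \<forall>x. invertible x \<longrightarrow> f (\<phi> x) = h x}"
  proof (unfold fvs.subspace_def, intro conjI ballI allI)
    show "0 \<in> {f :: 'a^'n^'n \<Rightarrow> 'a. \<exists>h\<in>PF (k * D). \<forall>x. invertible x \<longrightarrow> f (\<phi> x) = h x}"
      using PF_zero by (auto simp: zero_fun_def intro!: bexI[of _ "\<lambda>x. 0"])
  next
    fix f1 f2 :: "'a^'n^'n \<Rightarrow> 'a"
    assume "f1 \<in> {f. \<exists>h\<in>PF (k * D). \<forall>x. invertible x \<longrightarrow> f (\<phi> x) = h x}"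
      "f2 \<in> {f. \<exists>h\<in>PF (k * D). \<forall>x. invertible x \<longrightarrow> f (\<phi> x) = h x}"
    then obtain h1 h2 where "h1 \<in> PF (k*D)" "h2 \<in> PF (k*D)"
      "\<forall>x. invertible x \<longrightarrow> f1 (\<phi> x) = h1 x" "\<forall>x. invertible x \<longrightarrow> f2 (\<phi> x) = h2 x" by blast
    then show "f1 + f2 \<in> {f. \<exists>h\<in>PF (k * D). \<forall>x. invertible x \<longrightarrow> f (\<phi> x) = h x}"
      by (intro CollectI bexI[of _ "\<lambda>x. h1 x + h2 x"]) (auto intro: PF_add)
  next
    fix c and f1 :: "'a^'n^'n \<Rightarrow> 'a"
    assume "f1 \<in> {f. \<exists>h\<in>PF (k * D). \<forall>x. invertible x \<longrightarrow> f (\<phi> x) = h x}"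
    then obtain h1 where "h1 \<in> PF (k*D)" "\<forall>x. invertible x \<longrightarrow> f1 (\<phi> x) = h1 x" by blast
    then show "(\<lambda>x. c * f1 x) \<in> {f. \<exists>h\<in>PF (k * D). \<forall>x. invertible x \<longrightarrow> f (\<phi> x) = h x}"
      by (intro CollectI bexI[of _ "\<lambda>x. c * h1 x"]) (auto intro: PF_scale)
  qed
  have base: "\<exists>h\<in>PF (k * D). \<forall>x. invertible x \<longrightarrow> g (\<phi> x) = h x" if gB: "g \<in> Bm D" for g :: "'a^'n^'n \<Rightarrow> 'a"
  proof -
    obtain cs where cs: "g = pmon cs" "length cs \<le> D" using gB by (auto simp: Bm_def)
    obtain h where h: "h \<in> PF (k * length cs)" "\<forall>x. invertible x \<longrightarrow> pmon cs (\<phi> x) = h x"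
      using subst_pmon[OF assms(1)] by blast
    have "h \<in> PF (k*D)" using h(1) PF_mono[of "k * length cs" "k*D"] cs(2) by auto
    then show ?thesis using h cs by blast
  qed
  show ?thesis using fvs.span_induct[OF f' sub] base by blast
qed

definition cl :: "nat \<Rightarrow> ('a::field^'n^'n) set \<Rightarrow> ('a^'n^'n) set" where
  "cl D S = {x. invertible x \<and> (\<forall>f\<in>PF D. (\<forall>s\<in>S. f s = 0) \<longrightarrow> f x = 0)}"

lemma cl_subst:
  fixes \<phi> :: "'a::field^'n^'n \<Rightarrow> 'a^'n^'n"
  assumes "good k \<phi>" "S \<subseteq> Collect invertible" "\<forall>s\<in>S. \<phi> s \<in> cl D T" "x \<in> cl (k*D) S"
  shows "\<phi> x \<in> cl D T"
proof -
  have xi: "invertible x" using assms(4) by (simp add: cl_def)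
  have "invertible (\<phi> x)" using assms(1) xi unfolding good_def by blast
  moreover have "f (\<phi> x) = 0" if f: "f \<in> PF D" "\<forall>t\<in>T. f t = 0" for f
  proof -
    obtain h where h: "h \<in> PF (k*D)" "\<forall>x. invertible x \<longrightarrow> f (\<phi> x) = h x"
      using subst_PF[OF assms(1) f(1)] by blast
    have "\<forall>s\<in>S. h s = 0"
    proof
      fix s assume s: "s \<in> S"
      then have "f (\<phi> s) = 0" using assms(3) f unfolding cl_def by blast
      then show "h s = 0" using h(2) s assms(2) by auto
    qed
    then have "h x = 0" using assms(4) h(1) unfolding cl_def by blast
    then show ?thesis using h(2) xi by simp
  qed
  ultimately show ?thesis unfolding cl_def by blast
qed

lemma cl_invertible: "x \<in> cl D S \<Longrightarrow> invertible x"
  by (simp add: cl_def)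

lemma cl_incl: "S \<subseteq> Collect invertible \<Longrightarrow> S \<subseteq> cl D S"
  unfolding cl_def by blast

lemma cl_mono_deg: "D \<le> D' \<Longrightarrow> cl D' S \<subseteq> cl D S"
  unfolding cl_def using PF_mono by blast

lemma cl_mono_set: "S \<subseteq> cl D T \<Longrightarrow> cl D S \<subseteq> cl D T"
  unfolding cl_def by blast

lemma good_lr:
  fixes g h :: "'a::field^'n^'n"
  assumes "invertible g" "invertible h"
  shows "good 1 (\<lambda>x. g ** x ** h)"
  unfolding good_def
proof (intro exI conjI allI impI)
  show "MP 1 (\<lambda>x. g ** x ** h)"
    using MP_mult[OF MP_mult[OF MP_const[of 0 g] MP_id] MP_const[of 0 h]] by (simp add: numeral_2_eq_2)
  show "MP 1 (\<lambda>x. matrix_inv h ** matrix_inv x ** matrix_inv g)"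
    using MP_mult[OF MP_mult[OF MP_const[of 0 "matrix_inv h"] MP_minv] MP_const[of 0 "matrix_inv g"]] by (simp add: numeral_2_eq_2)
  fix x :: "'a^'n^'n" assume x: "invertible x"
  show "invertible (g ** x ** h)" using assms x by (intro invertible_mult)
  show "g ** x ** h = g ** x ** h" ..
  show "matrix_inv (g ** x ** h) = matrix_inv h ** matrix_inv x ** matrix_inv g"
    using assms x by (simp add: minv_mult invertible_mult matrix_mul_assoc)
qed

lemma good_inv: "good 1 (\<lambda>x. matrix_inv (x::'a::field^'n^'n))"
  unfolding good_def
  apply (rule exI[of _ "\<lambda>x. matrix_inv x"])
  apply (rule exI[of _ "\<lambda>x. x"])
  using MP_id MP_minv by (auto simp: minv_invertible minv_minv)

lemma good_cm1:
  fixes b :: "'a::field^'n^'n"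
  assumes "invertible b"
  shows "good 2 (\<lambda>y. cm y b)"
  unfolding good_def
proof (intro exI conjI allI impI)
  show "MP 2 (\<lambda>y. cm y b)"
    unfolding cm_def using MP_mult[OF MP_mult[OF MP_mult[OF MP_id MP_const[of 0 b]] MP_minv] MP_const[of 0 "matrix_inv b"]] by (simp add: numeral_2_eq_2)
  show "MP 2 (\<lambda>y. cm b y)"
    unfolding cm_def using MP_mult[OF MP_mult[OF MP_mult[OF MP_const[of 0 b] MP_id] MP_const[of 0 "matrix_inv b"]] MP_minv] by (simp add: numeral_2_eq_2)
  fix x :: "'a^'n^'n" assume x: "invertible x"
  show "invertible (cm x b)" using assms x by (intro cm_invertible)
  show "cm x b = cm x b" ..
  show "matrix_inv (cm x b) = cm b x" using assms x by (simp add: cm_inv)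
qed

lemma good_cm2:
  fixes a :: "'a::field^'n^'n"
  assumes "invertible a"
  shows "good 2 (\<lambda>y. cm a y)"
  unfolding good_def
proof (intro exI conjI allI impI)
  show "MP 2 (\<lambda>y. cm a y)"
    unfolding cm_def using MP_mult[OF MP_mult[OF MP_mult[OF MP_const[of 0 a] MP_id] MP_const[of 0 "matrix_inv a"]] MP_minv] by (simp add: numeral_2_eq_2)
  show "MP 2 (\<lambda>y. cm y a)"
    unfolding cm_def using MP_mult[OF MP_mult[OF MP_mult[OF MP_id MP_const[of 0 a]] MP_minv] MP_const[of 0 "matrix_inv a"]] by (simp add: numeral_2_eq_2)
  fix x :: "'a^'n^'n" assume x: "invertible x"
  show "invertible (cm a x)" using assms x by (intro cm_invertible)
  show "cm a x = cm a x" ..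
  show "matrix_inv (cm a x) = cm x a" using assms x by (simp add: cm_inv)
qed

lemma cl_comm:
  fixes A B :: "('a::field^'n^'n) set"
  assumes "A \<subseteq> Collect invertible" "B \<subseteq> Collect invertible"
    "a \<in> cl (2*D) A" "b \<in> cl (2*D) B"
  shows "cm a b \<in> cl D {cm x y | x y. x \<in> A \<and> y \<in> B}"
proof -
  let ?C = "{cm x y | x y. x \<in> A \<and> y \<in> B}"
  have ai: "invertible a" using assms(3) by (rule cl_invertible)
  have step1: "cm a y \<in> cl D ?C" if y: "y \<in> B" for y
  proof -
    have yi: "invertible y" using y assms(2) by auto
    have "\<forall>s\<in>A. cm s y \<in> cl D ?C"
    proof
      fix s assume "s \<in> A"
      then have "cm s y \<in> ?C" using y by blast
      moreover have "?C \<subseteq> Collect invertible" using assms(1,2) cm_invertible by blast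
      ultimately show "cm s y \<in> cl D ?C" using cl_incl by blast
    qed
    then show ?thesis using cl_subst[OF good_cm1[OF yi] assms(1) _ assms(3)] by blast
  qed
  show ?thesis using cl_subst[OF good_cm2[OF ai] assms(2) _ assms(4)] step1 by blast
qed



lemma GL_mult: "x \<otimes>\<^bsub>GL\<^esub> y = x ** y" by (simp add: GL_def)
lemma GL_one: "\<one>\<^bsub>GL\<^esub> = mat 1" by (simp add: GL_def)
lemma GL_carrier: "carrier GL = Collect invertible" by (simp add: GL_def)

lemma GL_sub_inv: "invertible x \<Longrightarrow> x \<in> S \<Longrightarrow> x \<in> carrier GL" by (simp add: GL_def)

lemma subgroup_inv:
  assumes "subgroup S (GL :: ('a::field^'n^'n) monoid)" "s \<in> S"
  shows "matrix_inv s \<in> S" "invertible s"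
proof -
  have "s \<in> carrier GL" using assms subgroup.subset by blast
  then show "invertible s" by (simp add: GL_def)
  then show "matrix_inv s \<in> S" using subgroup.m_inv_closed[OF assms] GL_inv by metis
qed

lemma subgroup_mult: "subgroup S (GL :: ('a::field^'n^'n) monoid) \<Longrightarrow> a \<in> S \<Longrightarrow> b \<in> S \<Longrightarrow> a ** b \<in> S"
  using subgroup.m_closed GL_mult by metis

lemma subgroup_one: "subgroup S (GL :: ('a::field^'n^'n) monoid) \<Longrightarrow> mat 1 \<in> S"
  using subgroup.one_closed GL_one by metis

lemma subgroup_invs: "subgroup S (GL :: ('a::field^'n^'n) monoid) \<Longrightarrow> S \<subseteq> Collect invertible"
  using subgroup_inv(2) by blast

lemma cl_subgroup:
  assumes S: "subgroup S (GL :: ('a::field^'n^'n) monoid)"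
  shows "subgroup (cl D S) GL"
proof (rule group.subgroupI[OF group_GL])
  have Si: "S \<subseteq> Collect invertible" using subgroup_invs[OF S] .
  show "cl D S \<subseteq> carrier GL" by (auto simp: GL_def cl_def)
  show "cl D S \<noteq> {}" using cl_incl[OF Si] subgroup_one[OF S] by blast
  fix a assume a: "a \<in> cl D S"
  have "\<forall>s\<in>S. matrix_inv s \<in> cl D S" using subgroup_inv[OF S] cl_incl[OF Si] by blast
  then have "matrix_inv a \<in> cl D S" using cl_subst[OF good_inv Si, of D S a] a by simp
  then show "inv\<^bsub>GL\<^esub> a \<in> cl D S" using GL_inv cl_invertible[OF a] by metis
next
  have Si: "S \<subseteq> Collect invertible" using subgroup_invs[OF S] .
  fix a b assume a: "a \<in> cl D S" and b: "b \<in> cl D S"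
  have 1: "s ** b \<in> cl D S" if s: "s \<in> S" for s
  proof -
    have "\<forall>t\<in>S. s ** t ** mat 1 \<in> cl D S" using subgroup_mult[OF S s] cl_incl[OF Si] by auto
    then show ?thesis using cl_subst[OF good_lr[of s "mat 1"] Si, of D S b] b Si s invertible_one by auto
  qed
  have "\<forall>t\<in>S. mat 1 ** t ** b \<in> cl D S" using 1 by simp
  then have "mat 1 ** a ** b \<in> cl D S"
    using cl_subst[OF good_lr[of "mat 1" b] Si, of D S a] a cl_invertible[OF b] invertible_one by auto
  then show "a \<otimes>\<^bsub>GL\<^esub> b \<in> cl D S" by (simp add: GL_mult)
qed

lemma cl_one:
  assumes "1 \<le> D"
  shows "cl D {mat 1 :: 'a::field^'n^'n} \<subseteq> {mat 1}"
proof
  fix x :: "'a^'n^'n" assume x: "x \<in> cl D {mat 1}"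
  have "x $ i $ j = mat 1 $ i $ j" for i j
  proof -
    have "(\<lambda>y::'a^'n^'n. y $ i $ j) \<in> PF 1" using MP_id unfolding MP_def by blast
    then have "(\<lambda>y::'a^'n^'n. y $ i $ j - (mat 1 :: 'a^'n^'n) $ i $ j) \<in> PF 1"
      by (intro PF_diff PF_const)
    then have "(\<lambda>y::'a^'n^'n. y $ i $ j - (mat 1 :: 'a^'n^'n) $ i $ j) \<in> PF D"
      using PF_mono[OF assms] by blast
    then show ?thesis using x unfolding cl_def by auto
  qed
  then show "x \<in> {mat 1}" by (simp add: vec_eq_iff)
qed

lemma derived_cl:
  assumes Y: "subgroup Y (GL :: ('a::field^'n^'n) monoid)"
  shows "derived GL (cl (2*D) Y) \<subseteq> cl D (derived GL Y)"
proof -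
  have Yi: "Y \<subseteq> Collect invertible" using subgroup_invs[OF Y] .
  have dY: "subgroup (derived GL Y) GL"
    using group.derived_is_subgroup[OF group_GL] subgroup.subset[OF Y] by blast
  have s1: "{cm x y | x y. x \<in> Y \<and> y \<in> Y} \<subseteq> derived GL Y"
  proof
    fix z assume "z \<in> {cm x y | x y. x \<in> Y \<and> y \<in> Y}"
    then obtain x y where z: "z = cm x y" "x \<in> Y" "y \<in> Y" by blast
    have "invertible x" "invertible y" using z Yi by auto
    then have "z = x \<otimes>\<^bsub>GL\<^esub> y \<otimes>\<^bsub>GL\<^esub> inv\<^bsub>GL\<^esub> x \<otimes>\<^bsub>GL\<^esub> inv\<^bsub>GL\<^esub> y"
      by (simp add: z cm_def GL_mult GL_inv)
    then have "z \<in> derived_set GL Y" using z(2,3) by blast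
    then show "z \<in> derived GL Y" unfolding derived_def by (rule generate.incl)
  qed
  have s2: "derived_set GL (cl (2*D) Y) \<subseteq> cl D (derived GL Y)"
  proof
    fix z assume "z \<in> derived_set GL (cl (2*D) Y)"
    then obtain a b where ab: "a \<in> cl (2*D) Y" "b \<in> cl (2*D) Y"
      "z = a \<otimes>\<^bsub>GL\<^esub> b \<otimes>\<^bsub>GL\<^esub> inv\<^bsub>GL\<^esub> a \<otimes>\<^bsub>GL\<^esub> inv\<^bsub>GL\<^esub> b" by blast
    then have z: "z = cm a b" using GL_inv[OF cl_invertible[OF ab(1)]] GL_inv[OF cl_invertible[OF ab(2)]]
      by (simp add: cm_def GL_mult)
    have "cm a b \<in> cl D {cm x y | x y. x \<in> Y \<and> y \<in> Y}" using cl_comm[OF Yi Yi ab(1,2)] .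
    moreover have "cl D {cm x y | x y. x \<in> Y \<and> y \<in> Y} \<subseteq> cl D (derived GL Y)"
      using cl_mono_set s1 cl_incl[OF subgroup_invs[OF dY]] by blast
    ultimately show "z \<in> cl D (derived GL Y)" using z by blast
  qed
  show ?thesis unfolding derived_def[of GL "cl (2*D) Y"]
    by (rule group.generate_subgroup_incl[OF group_GL s2 cl_subgroup[OF dY]])
qed

lemma derived_cl_iter:
  assumes H: "subgroup H (GL :: ('a::field^'n^'n) monoid)"
  shows "(derived GL ^^ m) (cl (2^m * D) H) \<subseteq> cl D ((derived GL ^^ m) H)"
proof (induction m arbitrary: D)
  case 0
  then show ?case by simp
next
  case (Suc m)
  have eq: "2^(Suc m) * D = 2^m * (2*D)" by simp
  have "(derived GL ^^ Suc m) (cl (2^(Suc m) * D) H) = derived GL ((derived GL ^^ m) (cl (2^m * (2*D)) H))"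
    by (simp only: eq funpow.simps comp_def)
  also have "\<dots> \<subseteq> derived GL (cl (2*D) ((derived GL ^^ m) H))"
    by (rule group.mono_derived[OF group_GL Suc.IH])
  also have "\<dots> \<subseteq> cl D (derived GL ((derived GL ^^ m) H))"
    by (rule derived_cl[OF group.exp_of_derived_is_subgroup[OF group_GL H]])
  finally show ?case by simp
qed

fun lcs :: "('a::field^'n^'n) set \<Rightarrow> nat \<Rightarrow> ('a^'n^'n) set" where
  "lcs X 0 = X"
| "lcs X (Suc k) = generate GL (\<Union>x\<in>X. \<Union>y\<in>lcs X k. {cm x y})"

lemma cm_in_subgroup:
  "subgroup X (GL :: ('a::field^'n^'n) monoid) \<Longrightarrow> x \<in> X \<Longrightarrow> y \<in> X \<Longrightarrow> cm x y \<in> X"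
  unfolding cm_def by (intro subgroup_mult subgroup_inv) auto

lemma lcs_sub:
  assumes X: "subgroup X (GL :: ('a::field^'n^'n) monoid)"
  shows "subgroup (lcs X k) GL \<and> lcs X k \<subseteq> X"
proof (induction k)
  case 0
  then show ?case using X by simp
next
  case (Suc k)
  have S: "(\<Union>x\<in>X. \<Union>y\<in>lcs X k. {cm x y}) \<subseteq> X" using Suc cm_in_subgroup[OF X] by blast
  have "(\<Union>x\<in>X. \<Union>y\<in>lcs X k. {cm x y}) \<subseteq> carrier GL" using S subgroup.subset[OF X] by blast
  then have "subgroup (lcs X (Suc k)) GL"
    using group.generate_is_subgroup[OF group_GL] by simp
  moreover have "lcs X (Suc k) \<subseteq> X"
    using group.generate_subgroup_incl[OF group_GL S X] by simp
  ultimately show ?case by blast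
qed

lemma lower_central_eq:
  assumes X: "subgroup X (GL :: ('a::field^'n^'n) monoid)"
  shows "lower_central (GL\<lparr>carrier := X\<rparr>) k = lcs X k"
proof (induction k)
  case 0
  then show ?case by simp
next
  case (Suc k)
  have L: "lcs X k \<subseteq> X" using lcs_sub[OF X] by blast
  have eq: "(\<Union>x\<in>carrier (GL\<lparr>carrier := X\<rparr>). \<Union>y\<in>lower_central (GL\<lparr>carrier := X\<rparr>) k.
        {x \<otimes>\<^bsub>GL\<lparr>carrier := X\<rparr>\<^esub> y \<otimes>\<^bsub>GL\<lparr>carrier := X\<rparr>\<^esub> inv\<^bsub>GL\<lparr>carrier := X\<rparr>\<^esub> x \<otimes>\<^bsub>GL\<lparr>carrier := X\<rparr>\<^esub> inv\<^bsub>GL\<lparr>carrier := X\<rparr>\<^esub> y})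
      = (\<Union>x\<in>X. \<Union>y\<in>lcs X k. {cm x y})"
  proof -
    have iX: "inv\<^bsub>GL\<lparr>carrier := X\<rparr>\<^esub> x = matrix_inv x" if "x \<in> X" for x
      using group.m_inv_consistent[OF group_GL X that] GL_inv subgroup_inv(2)[OF X that] by metis
    have iL: "inv\<^bsub>GL\<lparr>carrier := X\<rparr>\<^esub> x = matrix_inv x" if "x \<in> lcs X k" for x
      using iX L that by blast
    show ?thesis using Suc L by (auto simp: cm_def GL_mult iX iL)
  qed
  have S: "(\<Union>x\<in>X. \<Union>y\<in>lcs X k. {cm x y}) \<subseteq> X" using L cm_in_subgroup[OF X] by blast
  show ?case
    by (simp only: lower_central.simps eq lcs.simps group.generate_consistent[OF group_GL S X])
qed

lemma lcs_mono: "N \<subseteq> C \<Longrightarrow> lcs N k \<subseteq> lcs C k"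
proof (induction k)
  case 0 then show ?case by simp
next
  case (Suc k)
  then have "(\<Union>x\<in>N. \<Union>y\<in>lcs N k. {cm x y}) \<subseteq> (\<Union>x\<in>C. \<Union>y\<in>lcs C k. {cm x y})" by blast
  then show ?case using group.mono_generate[OF group_GL] by simp
qed

lemma lcs_cl_iter:
  assumes H: "subgroup H (GL :: ('a::field^'n^'n) monoid)"
  shows "lcs (cl (2^m * D) H) m \<subseteq> cl D (lcs H m)"
proof (induction m arbitrary: D)
  case 0
  then show ?case by simp
next
  case (Suc m)
  let ?C = "cl (2^(Suc m) * D) H"
  have eq: "2^(Suc m) * D = 2^m * (2*D)" by simp
  have IH: "lcs ?C m \<subseteq> cl (2*D) (lcs H m)" using Suc.IH[of "2*D"] by (simp only: eq)
  have Hi: "H \<subseteq> Collect invertible" using subgroup_invs[OF H] .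
  have LS: "subgroup (lcs H m) GL" "subgroup (lcs H (Suc m)) GL" using lcs_sub[OF H] by blast+
  have Li: "lcs H m \<subseteq> Collect invertible" using subgroup_invs[OF LS(1)] .
  have Cs: "?C \<subseteq> cl (2*D) H" by (rule cl_mono_deg) simp
  have s1: "{cm x y | x y. x \<in> H \<and> y \<in> lcs H m} \<subseteq> cl D (lcs H (Suc m))"
  proof -
    have "{cm x y | x y. x \<in> H \<and> y \<in> lcs H m} \<subseteq> lcs H (Suc m)"
      by (auto intro: generate.incl)
    then show ?thesis using cl_incl[OF subgroup_invs[OF LS(2)]] by blast
  qed
  have "(\<Union>x\<in>?C. \<Union>y\<in>lcs ?C m. {cm x y}) \<subseteq> cl D (lcs H (Suc m))"
  proof (intro subsetI, elim UN_E)
    fix z x y assume x: "x \<in> ?C" and y: "y \<in> lcs ?C m" and z: "z \<in> {cm x y}"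
    have "cm x y \<in> cl D {cm x y | x y. x \<in> H \<and> y \<in> lcs H m}"
      using cl_comm[OF Hi Li] x y Cs IH by blast
    then show "z \<in> cl D (lcs H (Suc m))" using z cl_mono_set[OF s1] by blast
  qed
  then show ?case
    using group.generate_subgroup_incl[OF group_GL _ cl_subgroup[OF LS(2)]] by simp
qed



lemma mi_cancel1: "invertible (A::'a::field^'n^'n) \<Longrightarrow> X ** A ** matrix_inv A = X"
  by (simp add: minv matrix_mul_assoc[symmetric])
lemma mi_cancel2: "invertible (A::'a::field^'n^'n) \<Longrightarrow> X ** matrix_inv A ** A = X"
  by (simp add: minv matrix_mul_assoc[symmetric])
lemma minv_one: "matrix_inv (mat 1 :: 'a::field^'n^'n) = mat 1"
  by (rule minv_unique[OF invertible_one]) simp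

lemma conj_mult: "invertible (g::'a::field^'n^'n) \<Longrightarrow>
   matrix_inv g ** (a ** b) ** g = (matrix_inv g ** a ** g) ** (matrix_inv g ** b ** g)"
  by (simp add: matrix_mul_assoc mi_cancel1)

lemma conj_inv: "invertible (g::'a::field^'n^'n) \<Longrightarrow> invertible a \<Longrightarrow>
   matrix_inv g ** matrix_inv a ** g = matrix_inv (matrix_inv g ** a ** g)"
  by (simp add: minv_mult invertible_mult minv_invertible minv_minv matrix_mul_assoc)

lemma conj_conj: fixes g x h :: "'a::field^'n^'n" shows "invertible g \<Longrightarrow> invertible x \<Longrightarrow>
   matrix_inv g ** (x ** h ** matrix_inv x) ** g = matrix_inv (matrix_inv x ** g) ** h ** (matrix_inv x ** g)"
proof -
  assume g: "invertible g" and x: "invertible x"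
  have "matrix_inv (matrix_inv x ** g) = matrix_inv g ** x"
    using minv_mult[OF minv_invertible[OF x] g] minv_minv[OF x] by simp
  then show ?thesis by (simp add: matrix_mul_assoc)
qed

lemma dim_stable:
  fixes U U' :: "('x \<Rightarrow> 'a::field) set"
  assumes "fvs.subspace U" "fvs.subspace U'" "U \<subseteq> U'" "U' \<subseteq> fvs.span T" "finite T"
    "fvs.dim U' \<le> fvs.dim U"
  shows "U' \<subseteq> U"
proof (rule ccontr)
  assume "\<not> U' \<subseteq> U"
  then obtain u where u: "u \<in> U'" "u \<notin> U" by blast
  obtain b where b: "b \<subseteq> U" "fvs.independent b" "U \<subseteq> fvs.span b" "card b = fvs.dim U"
    by (rule fvs.basis_exists)
  have "fvs.span b \<subseteq> U" using b(1) assms(1) fvs.span_minimal by blast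
  then have "u \<notin> fvs.span b" using u by blast
  then have ind: "fvs.independent (insert u b)" using fvs.independent_insertI b(2) by blast
  have "insert u b \<subseteq> U'" using b(1) u assms(3) by blast
  then obtain B where B: "insert u b \<subseteq> B" "B \<subseteq> U'" "fvs.independent B" "U' \<subseteq> fvs.span B"
    using fvs.maximal_independent_subset_extend[OF _ ind] by blast
  have cB: "card B = fvs.dim U'" using fvs.basis_card_eq_dim[OF B(2) B(4) B(3)] .
  have "B \<subseteq> fvs.span T" using B(2) assms(4) by (rule order_trans)
  then have fB: "finite B" using fvs.independent_span_bound[OF assms(5) B(3)] by simp
  have "b \<subseteq> B" using B(1) by (rule subset_trans[OF subset_insertI])
  then have fb: "finite b" using fB by (rule finite_subset)
  have "u \<notin> b" using u(2) b(1) by (auto)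
  then have "card (insert u b) = Suc (card b)" using fb by simp
  moreover have "card (insert u b) \<le> card B" using card_mono[OF fB B(1)] .
  ultimately have "Suc (fvs.dim U) \<le> fvs.dim U'" using cB b(4) by simp
  then show False using assms(6) by simp
qed

lemma cont_lr:
  assumes T: "topological_group_on T (GL\<lparr>carrier := G\<rparr>)" and a: "a \<in> G" and b: "b \<in> G"
  shows "continuous_map T T (\<lambda>x. a ** x ** (b :: 'a::field^'n^'n))"
proof -
  have tG: "topspace T = G" and M: "continuous_map (prod_topology T T) T (\<lambda>(x, y). x ** y)"
    using T by (simp_all add: topological_group_on_def GL_def)
  have ca: "continuous_map T T (\<lambda>x. a)" using a tG by simp
  have cb: "continuous_map T T (\<lambda>x. b)" using b tG by simp
  have ci: "continuous_map T T (\<lambda>x. x)" using continuous_map_id[of T] by (simp add: id_def)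
  have 1: "continuous_map T T (\<lambda>x. a ** x)"
  proof -
    have "continuous_map T (prod_topology T T) (\<lambda>x. (a, x))"
      by (rule continuous_map_pairedI[OF ca ci])
    then have "continuous_map T T ((\<lambda>(x, y). x ** y) \<circ> (\<lambda>x. (a, x)))"
      using M by (rule continuous_map_compose)
    then show ?thesis by (simp add: comp_def)
  qed
  have "continuous_map T (prod_topology T T) (\<lambda>x. (a ** x, b))"
    by (rule continuous_map_pairedI[OF 1 cb])
  then have "continuous_map T T ((\<lambda>(x, y). x ** y) \<circ> (\<lambda>x. (a ** x, b)))"
    using M by (rule continuous_map_compose)
  then show ?thesis by (simp add: comp_def)
qed



lemma exists_normal:
  fixes G H :: "('a::field^'n^'n) set" and T :: "('a^'n^'n) topology"
  assumes G: "subgroup G GL"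
    and T: "topological_group_on T (GL\<lparr>carrier := G\<rparr>)"
    and H: "subgroup H (GL\<lparr>carrier := G\<rparr>)" and Hopen: "openin T H"
  shows "\<exists>N. N \<lhd> GL\<lparr>carrier := G\<rparr> \<and> openin T N \<and> N \<subseteq> cl E H"
proof -
  have grp: "group (GL :: ('a^'n^'n) monoid)" by (rule group_GL)
  have HGL: "subgroup H GL" using group.incl_subgroup[OF grp G H] .
  have HG: "H \<subseteq> G" using subgroup.subset[OF H] by simp
  have Gi: "\<And>g. g \<in> G \<Longrightarrow> invertible g" using subgroup_inv(2)[OF G] by blast
  have Ginv: "\<And>g. g \<in> G \<Longrightarrow> matrix_inv g \<in> G" using subgroup_inv(1)[OF G] by blast
  have Gmult: "\<And>a b. a \<in> G \<Longrightarrow> b \<in> G \<Longrightarrow> a ** b \<in> G" using subgroup_mult[OF G] by blast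
  have Gone: "mat 1 \<in> G" using subgroup_one[OF G] .
  have tG: "topspace T = G" using T by (simp add: topological_group_on_def GL_def)
  define C where "C = cl E H"
  have Csub: "subgroup C GL" unfolding C_def by (rule cl_subgroup[OF HGL])
  have HC: "H \<subseteq> C" unfolding C_def using cl_incl[OF subgroup_invs[OF HGL]] .
  define X :: "('a^'n^'n) set \<Rightarrow> ('a^'n^'n) set" where "X F = {x. invertible x \<and> (\<forall>g\<in>F. matrix_inv g ** x ** g \<in> C)}" for F
  define J :: "('a^'n^'n) set \<Rightarrow> ('a^'n^'n \<Rightarrow> 'a) set" where "J F = {f \<in> PF E. \<forall>x\<in>X F. f x = 0}" for F
  have Jsub: "fvs.subspace (J F)" for F
  proof -
    have "fvs.subspace (PF E)" by (rule PF_subspace)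
    then show ?thesis unfolding J_def fvs.subspace_def by (auto simp: distrib_left)
  qed
  have JPF: "J F \<subseteq> fvs.span (Bm E :: ('a^'n^'n \<Rightarrow> 'a) set)" for F unfolding J_def PF_def by blast
  have Jdim: "fvs.dim (J F) \<le> card (Bm E :: ('a^'n^'n \<Rightarrow> 'a) set)" for F
    by (rule fvs.dim_le_card[OF JPF finite_Bm])
  define DS where "DS = {fvs.dim (J F) | F. finite F \<and> F \<subseteq> G}"
  have DSfin: "finite DS"
    by (rule finite_subset[of _ "{..card (Bm E :: ('a^'n^'n \<Rightarrow> 'a) set)}"]) (auto simp: DS_def Jdim)
  have DSne: "DS \<noteq> {}" unfolding DS_def by blast
  obtain m where m: "m = Max DS" "m \<in> DS" using Max_in[OF DSfin DSne] by blast
  from m(2) obtain F0 where F0': "finite F0" "F0 \<subseteq> G" "fvs.dim (J F0) = m"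
    unfolding DS_def by blast
  have F0: "finite F0" "F0 \<subseteq> G" "fvs.dim (J F0) = Max DS" using F0' m(1) by auto
  have key: "matrix_inv g ** x ** g \<in> C" if g: "g \<in> G" and x: "x \<in> X F0" for g x
  proof -
    let ?F = "insert g F0"
    have XF: "X ?F \<subseteq> X F0" unfolding X_def by blast
    then have J1: "J F0 \<subseteq> J ?F" unfolding J_def by blast
    have "fvs.dim (J ?F) \<in> DS" unfolding DS_def using F0 g by blast
    then have "fvs.dim (J ?F) \<le> fvs.dim (J F0)" using F0(3) Max_ge[OF DSfin] by simp
    then have J2: "J ?F \<subseteq> J F0" using dim_stable[OF Jsub Jsub J1 JPF finite_Bm] by blast
    have xi: "invertible x" using x unfolding X_def by blast
    have gi: "invertible g" using Gi g .
    have ci: "invertible (matrix_inv g ** x ** g)" using xi gi by (intro invertible_mult minv_invertible)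
    have "f (matrix_inv g ** x ** g) = 0" if f: "f \<in> PF E" "\<forall>s\<in>H. f s = 0" for f
    proof -
      obtain h where h: "h \<in> PF (1*E)" "\<forall>y. invertible y \<longrightarrow> f (matrix_inv g ** y ** g) = h y"
        using subst_PF[OF good_lr[OF minv_invertible[OF gi] gi] f(1)] by blast
      have "h \<in> J ?F"
        unfolding J_def
      proof (intro CollectI conjI ballI)
        show "h \<in> PF E" using h(1) by simp
        fix y assume y: "y \<in> X ?F"
        then have "invertible y" "matrix_inv g ** y ** g \<in> C" unfolding X_def by auto
        then have "f (matrix_inv g ** y ** g) = 0" using f unfolding C_def cl_def by blast
        then show "h y = 0" using h(2) \<open>invertible y\<close> by simp
      qed
      then have "h \<in> J F0" using J2 by blast
      then have "h x = 0" using x unfolding J_def by blast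
      then show ?thesis using h(2) xi by simp
    qed
    then show ?thesis using ci unfolding C_def cl_def by blast
  qed
  define N where "N = {x \<in> G. \<forall>g\<in>G. matrix_inv g ** x ** g \<in> C}"
  have NC: "N \<subseteq> C"
  proof
    fix x assume "x \<in> N"
    then have "matrix_inv (mat 1) ** x ** mat 1 \<in> C" using Gone unfolding N_def by blast
    then show "x \<in> C" by (simp add: minv_one)
  qed
  have None: "mat 1 \<in> N" unfolding N_def
    using Gone subgroup_one[OF Csub] by (auto simp: minv Gi)
  have Nmult: "a ** b \<in> N" if ab: "a \<in> N" "b \<in> N" for a b
    unfolding N_def
  proof (intro CollectI conjI ballI)
    show "a ** b \<in> G" using ab Gmult unfolding N_def by blast
    fix g assume g: "g \<in> G"
    have "matrix_inv g ** a ** g \<in> C" "matrix_inv g ** b ** g \<in> C" using ab g unfolding N_def by blast+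
    then have "(matrix_inv g ** a ** g) ** (matrix_inv g ** b ** g) \<in> C" by (rule subgroup_mult[OF Csub])
    then show "matrix_inv g ** (a ** b) ** g \<in> C" using conj_mult[OF Gi[OF g]] by simp
  qed
  have Ninv: "matrix_inv a \<in> N" if a: "a \<in> N" for a
  proof -
    have ai: "invertible a" using a Gi unfolding N_def by blast
    show ?thesis unfolding N_def
    proof (intro CollectI conjI ballI)
      show "matrix_inv a \<in> G" using a Ginv unfolding N_def by blast
      fix g assume g: "g \<in> G"
      have "matrix_inv g ** a ** g \<in> C" using a g unfolding N_def by blast
      then have "matrix_inv (matrix_inv g ** a ** g) \<in> C" by (rule subgroup_inv(1)[OF Csub])
      then show "matrix_inv g ** matrix_inv a ** g \<in> C" using conj_inv[OF Gi[OF g] ai] by simp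
    qed
  qed
  have Gs: "group (GL\<lparr>carrier := G\<rparr>)" using group.subgroup_imp_group[OF grp G] .
  have invG: "inv\<^bsub>GL\<lparr>carrier := G\<rparr>\<^esub> x = matrix_inv x" if "x \<in> G" for x
    using group.m_inv_consistent[OF grp G that] GL_inv Gi[OF that] by metis
  have NsubG: "N \<subseteq> G" unfolding N_def by blast
  have Nsg: "subgroup N (GL\<lparr>carrier := G\<rparr>)"
  proof (rule group.subgroupI[OF Gs])
    show "N \<subseteq> carrier (GL\<lparr>carrier := G\<rparr>)" using NsubG by simp
    show "N \<noteq> {}" using None by blast
    fix a assume "a \<in> N" then show "inv\<^bsub>GL\<lparr>carrier := G\<rparr>\<^esub> a \<in> N" using Ninv invG NsubG by auto
  next
    fix a b assume "a \<in> N" "b \<in> N" then show "a \<otimes>\<^bsub>GL\<lparr>carrier := G\<rparr>\<^esub> b \<in> N"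
      using Nmult by (simp add: GL_def)
  qed
  have Nnormal: "N \<lhd> GL\<lparr>carrier := G\<rparr>"
  proof (rule group.normal_invI[OF Gs Nsg])
    fix x h assume x: "x \<in> carrier (GL\<lparr>carrier := G\<rparr>)" and h: "h \<in> N"
    have xG: "x \<in> G" using x by simp
    have eq: "x \<otimes>\<^bsub>GL\<lparr>carrier := G\<rparr>\<^esub> h \<otimes>\<^bsub>GL\<lparr>carrier := G\<rparr>\<^esub> inv\<^bsub>GL\<lparr>carrier := G\<rparr>\<^esub> x
        = x ** h ** matrix_inv x" using invG[OF xG] by (simp add: GL_def)
    have hG: "h \<in> G" using h NsubG by blast
    have "x ** h ** matrix_inv x \<in> N"
      unfolding N_def
    proof (intro CollectI conjI ballI)
      show "x ** h ** matrix_inv x \<in> G" using xG hG by (intro Gmult Ginv)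
      fix g assume g: "g \<in> G"
      have "matrix_inv x ** g \<in> G" using xG g by (intro Gmult Ginv)
      then have "matrix_inv (matrix_inv x ** g) ** h ** (matrix_inv x ** g) \<in> C"
        using h unfolding N_def by blast
      then show "matrix_inv g ** (x ** h ** matrix_inv x) ** g \<in> C"
        using conj_conj[OF Gi[OF g] Gi[OF xG]] by simp
    qed
    then show "x \<otimes>\<^bsub>GL\<lparr>carrier := G\<rparr>\<^esub> h \<otimes>\<^bsub>GL\<lparr>carrier := G\<rparr>\<^esub> inv\<^bsub>GL\<lparr>carrier := G\<rparr>\<^esub> x \<in> N"
      using eq by simp
  qed
  define K :: "('a^'n^'n) set \<Rightarrow> ('a^'n^'n) set" where "K F = {x \<in> G. \<forall>g\<in>F. matrix_inv g ** x ** g \<in> H}" for F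
  have Kopen: "finite F \<Longrightarrow> F \<subseteq> G \<Longrightarrow> openin T (K F)" for F
  proof (induction F rule: finite_induct)
    case empty
    have "K {} = topspace T" unfolding K_def using tG by auto
    then show ?case by simp
  next
    case (insert g F)
    have "K (insert g F) = K F \<inter> {x \<in> topspace T. matrix_inv g ** x ** g \<in> H}"
      unfolding K_def tG by auto
    moreover have "openin T {x \<in> topspace T. matrix_inv g ** x ** g \<in> H}"
      using openin_continuous_map_preimage[OF cont_lr[OF T Ginv[of g] _] Hopen] insert by blast
    ultimately show ?case using insert by auto
  qed
  have KN: "K F0 \<subseteq> N"
  proof
    fix x assume x: "x \<in> K F0"
    then have "x \<in> X F0" unfolding K_def X_def using Gi HC by blast
    then show "x \<in> N" using key x unfolding N_def K_def by blast
  qed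
  have K1: "mat 1 \<in> K F0"
    unfolding K_def using Gone subgroup_one[OF HGL] F0(2) by (auto simp: minv Gi subset_iff)
  have Neq: "N = (\<Union>n\<in>N. {x \<in> topspace T. matrix_inv n ** x ** mat 1 \<in> K F0})"
  proof
    show "N \<subseteq> (\<Union>n\<in>N. {x \<in> topspace T. matrix_inv n ** x ** mat 1 \<in> K F0})"
    proof
      fix x assume x: "x \<in> N"
      then have "matrix_inv x ** x ** mat 1 = mat 1" using Gi NsubG by (auto simp: minv)
      then show "x \<in> (\<Union>n\<in>N. {x \<in> topspace T. matrix_inv n ** x ** mat 1 \<in> K F0})"
        using x K1 tG NsubG by (intro UN_I[of x]) auto
    qed
  next
    show "(\<Union>n\<in>N. {x \<in> topspace T. matrix_inv n ** x ** mat 1 \<in> K F0}) \<subseteq> N"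
    proof (intro subsetI, elim UN_E)
      fix x n assume n: "n \<in> N" and x: "x \<in> {x \<in> topspace T. matrix_inv n ** x ** mat 1 \<in> K F0}"
      then have "matrix_inv n ** x \<in> N" using KN by auto
      then have "n ** (matrix_inv n ** x) \<in> N" using Nmult n by blast
      moreover have "n ** (matrix_inv n ** x) = x"
        using minv(1)[OF Gi[of n]] n NsubG by (auto simp: matrix_mul_assoc)
      ultimately show "x \<in> N" by simp
    qed
  qed
  have "openin T {x \<in> topspace T. matrix_inv n ** x ** mat 1 \<in> K F0}" if n: "n \<in> N" for n
    using openin_continuous_map_preimage[OF cont_lr[OF T Ginv Gone] Kopen[OF F0(1,2)]] n NsubG by blast
  then have "openin T (\<Union>n\<in>N. {x \<in> topspace T. matrix_inv n ** x ** mat 1 \<in> K F0})"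
    by (intro openin_Union) blast
  then have "openin T N" using Neq by simp
  show ?thesis using Nnormal NC \<open>openin T N\<close> unfolding C_def by blast
qed



lemma derived_pow_sub:
  assumes X: "subgroup X (GL :: ('a::field^'n^'n) monoid)"
  shows "(derived GL ^^ n) X \<subseteq> X"
proof (induction n)
  case 0 then show ?case by simp
next
  case (Suc n)
  then show ?case using group.derived_incl[OF group_GL Suc X] by simp
qed

lemma derived_iter_eq:
  assumes X: "subgroup X (GL :: ('a::field^'n^'n) monoid)"
  shows "(derived (GL\<lparr>carrier := X\<rparr>) ^^ n) X = (derived GL ^^ n) X"
proof (induction n)
  case 0 then show ?case by simp
next
  case (Suc n)
  then show ?case using group.derived_consistent[OF group_GL derived_pow_sub[OF X, of n] X] by simp
qed

lemma solvable_iff_GL: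
  assumes X: "subgroup X (GL :: ('a::field^'n^'n) monoid)"
  shows "solvable (GL\<lparr>carrier := X\<rparr>) \<longleftrightarrow> (\<exists>n. (derived GL ^^ n) X = {mat 1})"
proof -
  have "group (GL\<lparr>carrier := X\<rparr>)" using group.subgroup_imp_group[OF group_GL X] .
  then show ?thesis using group.solvable_iff_trivial_derived_seq[of "GL\<lparr>carrier := X\<rparr>"]
    derived_iter_eq[OF X] by (simp add: GL_def)
qed

lemma nilpotent_iff_GL:
  assumes X: "subgroup X (GL :: ('a::field^'n^'n) monoid)"
  shows "nilpotent_group (GL\<lparr>carrier := X\<rparr>) \<longleftrightarrow> (\<exists>k. lcs X k = {mat 1})"
proof -
  have "group (GL\<lparr>carrier := X\<rparr>)" using group.subgroup_imp_group[OF group_GL X] .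
  then show ?thesis unfolding nilpotent_group_def using lower_central_eq[OF X] by (simp add: GL_def)
qed

theorem lemma1p4:
  fixes G :: "('a::field ^ 'n ^ 'n) set" and T :: "('a ^ 'n ^ 'n) topology"
  assumes "infinite (UNIV :: 'a set)"
    and "subgroup G GL"
    and "topological_group_on T (GL\<lparr>carrier := G\<rparr>)"
  shows "((\<exists>H. subgroup H (GL\<lparr>carrier := G\<rparr>) \<and> openin T H \<and> solvable (GL\<lparr>carrier := H\<rparr>))
           \<longrightarrow> (\<exists>N. N \<lhd> GL\<lparr>carrier := G\<rparr> \<and> openin T N \<and> solvable (GL\<lparr>carrier := N\<rparr>)))
       \<and> ((\<exists>H. subgroup H (GL\<lparr>carrier := G\<rparr>) \<and> openin T H \<and> nilpotent_group (GL\<lparr>carrier := H\<rparr>))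
           \<longrightarrow> (\<exists>N. N \<lhd> GL\<lparr>carrier := G\<rparr> \<and> openin T N \<and> nilpotent_group (GL\<lparr>carrier := N\<rparr>)))"
proof (intro conjI impI)
  have G: "subgroup G GL" using assms(2) .
  have T: "topological_group_on T (GL\<lparr>carrier := G\<rparr>)" using assms(3) .
  have NGL: "subgroup N GL" if "N \<lhd> GL\<lparr>carrier := G\<rparr>" for N
    using group.incl_subgroup[OF group_GL G normal.axioms(1)[OF that]] .
  {
    assume "\<exists>H. subgroup H (GL\<lparr>carrier := G\<rparr>) \<and> openin T H \<and> solvable (GL\<lparr>carrier := H\<rparr>)"
    then obtain H where H: "subgroup H (GL\<lparr>carrier := G\<rparr>)" "openin T H" "solvable (GL\<lparr>carrier := H\<rparr>)"
      by blast
    have HGL: "subgroup H GL" using group.incl_subgroup[OF group_GL G H(1)] .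
    obtain n where n: "(derived GL ^^ n) H = {mat 1}" using H(3) solvable_iff_GL[OF HGL] by blast
    obtain N where N: "N \<lhd> GL\<lparr>carrier := G\<rparr>" "openin T N" "N \<subseteq> cl (2^n * 1) H"
      using exists_normal[OF G T H(1,2)] by blast
    have NS: "subgroup N GL" using NGL[OF N(1)] .
    have "(derived GL ^^ n) N \<subseteq> (derived GL ^^ n) (cl (2^n * 1) H)"
      by (rule group.mono_exp_of_derived[OF group_GL N(3)])
    also have "\<dots> \<subseteq> cl 1 ((derived GL ^^ n) H)" by (rule derived_cl_iter[OF HGL])
    also have "\<dots> \<subseteq> {mat 1}" using n cl_one[of 1] by simp
    finally have "(derived GL ^^ n) N \<subseteq> {mat 1}" .
    moreover have "mat 1 \<in> (derived GL ^^ n) N"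
      using subgroup_one[OF group.exp_of_derived_is_subgroup[OF group_GL NS]] .
    ultimately have "(derived GL ^^ n) N = {mat 1}" by blast
    then have "solvable (GL\<lparr>carrier := N\<rparr>)" using solvable_iff_GL[OF NS] by blast
    then show "\<exists>N. N \<lhd> GL\<lparr>carrier := G\<rparr> \<and> openin T N \<and> solvable (GL\<lparr>carrier := N\<rparr>)"
      using N by blast
  }
  {
    assume "\<exists>H. subgroup H (GL\<lparr>carrier := G\<rparr>) \<and> openin T H \<and> nilpotent_group (GL\<lparr>carrier := H\<rparr>)"
    then obtain H where H: "subgroup H (GL\<lparr>carrier := G\<rparr>)" "openin T H" "nilpotent_group (GL\<lparr>carrier := H\<rparr>)"
      by blast
    have HGL: "subgroup H GL" using group.incl_subgroup[OF group_GL G H(1)] .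
    obtain k where k: "lcs H k = {mat 1}" using H(3) nilpotent_iff_GL[OF HGL] by blast
    obtain N where N: "N \<lhd> GL\<lparr>carrier := G\<rparr>" "openin T N" "N \<subseteq> cl (2^k * 1) H"
      using exists_normal[OF G T H(1,2)] by blast
    have NS: "subgroup N GL" using NGL[OF N(1)] .
    have "lcs N k \<subseteq> lcs (cl (2^k * 1) H) k" by (rule lcs_mono[OF N(3)])
    also have "\<dots> \<subseteq> cl 1 (lcs H k)" by (rule lcs_cl_iter[OF HGL])
    also have "\<dots> \<subseteq> {mat 1}" using k cl_one[of 1] by simp
    finally have "lcs N k \<subseteq> {mat 1}" .
    moreover have "mat 1 \<in> lcs N k" using subgroup_one lcs_sub[OF NS, of k] by blast
    ultimately have "lcs N k = {mat 1}" by blast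
    then have "nilpotent_group (GL\<lparr>carrier := N\<rparr>)" using nilpotent_iff_GL[OF NS] by blast
    then show "\<exists>N. N \<lhd> GL\<lparr>carrier := G\<rparr> \<and> openin T N \<and> nilpotent_group (GL\<lparr>carrier := N\<rparr>)"
      using N by blast
  }
qed

end
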